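(* Let $1\le m\le n-1$, let $A\otimes B\in Y$, and let $\gamma\in\mathrm{GL}_{m(n-m)}(\mathbb{Z})$ be such that $(A\otimes B)\gamma\in Y$. Then $\gamma=\gamma_m\otimes\gamma_{n-m}$ with $\gamma_m\in\mathrm{GL}_m(\mathbb{Z})$ and $\gamma_{n-m}\in\mathrm{GL}_{n-m}(\mathbb{Z})$.
   Context: $Y=\{A\otimes B: A\in\mathrm{Mat}_{n\times m}(\mathbb{R}),B\in\mathrm{Mat}_{n\times(n-m)}(\mathbb{R})$ of full rank, column space of $A$ orthogonal to column space of $B\}$, where $A\otimes B=(a_{ij}B)_{i,j}$ denotes the Kronecker product (an $n^2\times m(n-m)$ matrix); similarly $\gamma_m\otimes\gamma_{n-m}$ is the Kronecker product. *)

theory Defs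
  imports "Jordan_Normal_Form.DL_Rank"
begin

definition kron_mat :: "'a :: times mat \<Rightarrow> 'a mat \<Rightarrow> 'a mat" where
  "kron_mat A B = mat (dim_row A * dim_row B) (dim_col A * dim_col B)
     (\<lambda>(i, j). A $$ (i div dim_row B, j div dim_col B) * B $$ (i mod dim_row B, j mod dim_col B))"

definition full_rank :: "nat \<Rightarrow> real mat \<Rightarrow> bool" where
  "full_rank n A \<longleftrightarrow> vec_space.rank n A = min (dim_row A) (dim_col A)"

definition col_orth :: "real mat \<Rightarrow> real mat \<Rightarrow> bool" where
  "col_orth A B \<longleftrightarrow> (\<forall>i < dim_col A. \<forall>j < dim_col B. col A i \<bullet> col B j = 0)"

definition Y_set :: "nat \<Rightarrow> nat \<Rightarrow> real mat set" where
  "Y_set n m = {kron_mat A B | A B. A \<in> carrier_mat n m \<and> B \<in> carrier_mat n (n - m)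
      \<and> full_rank n A \<and> full_rank n B \<and> col_orth A B}"

definition GL_int :: "nat \<Rightarrow> int mat set" where
  "GL_int k = {g. g \<in> carrier_mat k k \<and> invertible_mat g}"

end

theory Submission
  imports Defs
begin
lemma sum_split_divmod:
  fixes g :: "nat \<Rightarrow> nat \<Rightarrow> 'a::comm_monoid_add"
  shows "(\<Sum>t<b*d. g (t div d) (t mod d)) = (\<Sum>s<b. \<Sum>u<d. g s u)"
proof (induction b)
  case 0 then show ?case by simp
next
  case (Suc b)
  have "{..<Suc b * d} = {..<b*d} \<union> {b*d..<b*d+d}" by auto
  then have "(\<Sum>t<Suc b*d. g (t div d) (t mod d)) = (\<Sum>t<b*d. g (t div d) (t mod d)) + (\<Sum>t\<in>{b*d..<b*d+d}. g (t div d) (t mod d))"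
    by (simp add: sum.union_disjoint ivl_disj_int)
  also have "(\<Sum>t\<in>{b*d..<b*d+d}. g (t div d) (t mod d)) = (\<Sum>u<d. g b u)"
  proof -
    have "(\<Sum>t\<in>{b*d..<b*d+d}. g (t div d) (t mod d)) = (\<Sum>u\<in>{0..<d}. g ((u + b*d) div d) ((u+b*d) mod d))"
      by (subst sum.shift_bounds_nat_ivl[symmetric]) (simp add: add.commute)
    also have "\<dots> = (\<Sum>u<d. g b u)"
      by (rule sum.cong) auto
    finally show ?thesis .
  qed
  finally show ?case using Suc by simp
qed

lemma kron_carrier[simp]: "A \<in> carrier_mat a b \<Longrightarrow> B \<in> carrier_mat c d \<Longrightarrow> kron_mat A B \<in> carrier_mat (a*c) (b*d)"
  unfolding kron_mat_def by auto

lemma kron_dims[simp]: "dim_row (kron_mat A B) = dim_row A * dim_row B" "dim_col (kron_mat A B) = dim_col A * dim_col B"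
  unfolding kron_mat_def by auto

lemma kron_index[simp]: "i < dim_row A * dim_row B \<Longrightarrow> j < dim_col A * dim_col B \<Longrightarrow>
  kron_mat A B $$ (i,j) = A $$ (i div dim_row B, j div dim_col B) * B $$ (i mod dim_row B, j mod dim_col B)"
  unfolding kron_mat_def by auto

lemma div_lt: "(i::nat) < a * c \<Longrightarrow> i div c < a"
  by (simp add: less_mult_imp_div_less)
lemma mod_lt: "(i::nat) < a * c \<Longrightarrow> i mod c < c"
  by (metis mod_less_divisor mult_0_right not_less_zero zero_less_iff_neq_zero)

lemma kron_mult:
  fixes A :: "'a::comm_semiring_1 mat"
  assumes A: "A \<in> carrier_mat a b" and B: "B \<in> carrier_mat c d"
    and C: "C \<in> carrier_mat b e" and D: "D \<in> carrier_mat d f"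
  shows "kron_mat A B * kron_mat C D = kron_mat (A*C) (B*D)"
proof (rule eq_matI)
  show "dim_row (kron_mat A B * kron_mat C D) = dim_row (kron_mat (A*C) (B*D))"
   "dim_col (kron_mat A B * kron_mat C D) = dim_col (kron_mat (A*C) (B*D))" using A B C D by auto
  fix i j assume i: "i < dim_row (kron_mat (A*C) (B*D))" and j: "j < dim_col (kron_mat (A*C) (B*D))"
  then have i': "i < a*c" and j': "j < e*f" using A B C D by auto
  have "(kron_mat A B * kron_mat C D) $$ (i,j) = (\<Sum>t<b*d. A $$ (i div c, t div d) * B $$ (i mod c, t mod d) * (C $$ (t div d, j div f) * D $$ (t mod d, j mod f)))"
    using A B C D i' j' by (auto simp: scalar_prod_def atLeast0LessThan intro!: sum.cong)
  also have "\<dots> = (\<Sum>s<b. \<Sum>u<d. A $$ (i div c, s) * B $$ (i mod c, u) * (C $$ (s, j div f) * D $$ (u, j mod f)))"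
    by (rule sum_split_divmod)
  also have "\<dots> = (\<Sum>s<b. A $$ (i div c, s) * C $$ (s, j div f)) * (\<Sum>u<d. B $$ (i mod c, u) * D $$ (u, j mod f))"
    by (simp add: sum_product mult_ac)
  also have "\<dots> = kron_mat (A*C) (B*D) $$ (i,j)"
    using A B C D i' j' div_lt[OF i'] mod_lt[OF i'] div_lt[OF j'] mod_lt[OF j']
    by (simp add: scalar_prod_def atLeast0LessThan)
  finally show "(kron_mat A B * kron_mat C D) $$ (i,j) = kron_mat (A*C) (B*D) $$ (i,j)" .
qed

lemma kron_one: "kron_mat (1\<^sub>m a :: 'a::semiring_1 mat) (1\<^sub>m b) = 1\<^sub>m (a*b)"
proof (rule eq_matI)
  fix i j assume "i < dim_row (1\<^sub>m (a*b) :: 'a mat)" "j < dim_col (1\<^sub>m (a*b) :: 'a mat)"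
  then have i: "i < a*b" and j: "j < a*b" by auto
  have "(i div b = j div b \<and> i mod b = j mod b) = (i = j)"
    by (metis div_mult_mod_eq)
  then show "kron_mat (1\<^sub>m a) (1\<^sub>m b) $$ (i, j) = (1\<^sub>m (a*b) :: 'a mat) $$ (i, j)"
    using i j div_lt[OF i] mod_lt[OF i] div_lt[OF j] mod_lt[OF j] by auto
qed auto

lemma kron_map: "map_mat (of_int :: int \<Rightarrow> 'b::ring_1) (kron_mat A B) = kron_mat (map_mat of_int A) (map_mat of_int B)"
proof (rule eq_matI)
  fix i j assume "i < dim_row (kron_mat (map_mat (of_int :: int \<Rightarrow> 'b) A) (map_mat of_int B))"
    "j < dim_col (kron_mat (map_mat (of_int :: int \<Rightarrow> 'b) A) (map_mat of_int B))"
  then have i: "i < dim_row A * dim_row B" and j: "j < dim_col A * dim_col B" by auto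
  show "map_mat (of_int :: int \<Rightarrow> 'b) (kron_mat A B) $$ (i, j) = kron_mat (map_mat of_int A) (map_mat of_int B) $$ (i, j)"
    using i j div_lt[OF i] mod_lt[OF i] div_lt[OF j] mod_lt[OF j] by auto
qed auto


lemma (in vec_space) non_distinct_low_rank_gen:
assumes "A \<in> carrier_mat n nc"
and "\<not> distinct (cols A)"
shows "rank A < nc"
proof -
  obtain S where "maximal S (\<lambda>T. T \<subseteq> set (cols A) \<and> lin_indpt T)"
    using maximal_exists[of "(\<lambda>T. T \<subseteq> set (cols A) \<and> lin_indpt T)" "card (set (cols A))" "{}"]
    by (meson List.finite_set card_mono empty_iff empty_subsetI finite_lin_indpt2 rev_finite_subset)
  then have "card S \<le> card (set (cols A))" by (simp add: card_mono maximal_def)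
  then have "card S < nc"
    using assms(1) cols_length card_length \<open>\<not> distinct (cols A)\<close> card_distinct carrier_matD(2) nat_less_le
    by (metis dual_order.antisym dual_order.trans)
  then show ?thesis
    using rank_card_indpt[OF \<open>A \<in> carrier_mat n nc\<close> \<open>maximal S (\<lambda>T. T \<subseteq> set (cols A) \<and> lin_indpt T)\<close>]
    by simp
qed

lemma (in vec_space) full_rank_inj:
  assumes A: "A \<in> carrier_mat n nc" and r: "rank A = nc"
    and v: "v \<in> carrier_vec nc" and Av: "A *\<^sub>v v = 0\<^sub>v n"
  shows "v = 0\<^sub>v nc"
proof (rule ccontr)
  assume nz: "v \<noteq> 0\<^sub>v nc"
  show False
  proof (cases "distinct (cols A)")
    case True
    then have "lin_indpt (set (cols A))" using full_rank_lin_indpt r A by auto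
    then show False using lin_depI[OF A v nz Av] True by blast
  next
    case False
    then show False using non_distinct_low_rank_gen[OF A] r by simp
  qed
qed

lemma self_scalar_zero_real:
  fixes w :: "real vec"
  assumes "w \<bullet> w = 0"
  shows "w = 0\<^sub>v (dim_vec w)"
proof -
  have "(\<Sum>i\<in>{0..<dim_vec w}. w $ i * w $ i) = 0" using assms unfolding scalar_prod_def by simp
  then have "\<forall>i\<in>{0..<dim_vec w}. w $ i * w $ i = 0"
    by (subst sum_nonneg_eq_0_iff[symmetric]) auto
  then show ?thesis by (intro eq_vecI) auto
qed

lemma left_inverse_exists:
  fixes A :: "real mat"
  assumes A: "A \<in> carrier_mat n nc" and r: "vec_space.rank n A = nc"
  shows "\<exists>L \<in> carrier_mat nc n. L * A = 1\<^sub>m nc"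
proof -
  define G where "G = transpose_mat A * A"
  have G: "G \<in> carrier_mat nc nc" unfolding G_def using A by auto
  have "det G \<noteq> 0"
  proof
    assume "det G = 0"
    then obtain v where v: "v \<in> carrier_vec nc" "v \<noteq> 0\<^sub>v nc" "G *\<^sub>v v = 0\<^sub>v nc"
      using det_0_iff_vec_prod_zero_field[OF G] by blast
    have "transpose_mat A *\<^sub>v (A *\<^sub>v v) = 0\<^sub>v nc"
      using v A unfolding G_def by (metis assoc_mult_mat_vec transpose_carrier_mat)
    then have "0 = (transpose_mat A *\<^sub>v (A *\<^sub>v v)) \<bullet> v" using v by simp
    also have "\<dots> = (A *\<^sub>v v) \<bullet> (A *\<^sub>v v)"
      by (rule transpose_vec_mult_scalar[OF A v(1)]) (use A v in auto)
    finally have "A *\<^sub>v v = 0\<^sub>v n" using self_scalar_zero_real[of "A *\<^sub>v v"] A by simp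
    then show False using vec_space.full_rank_inj[OF A r v(1)] v(2) by simp
  qed
  from det_non_zero_imp_unit[OF G this, of "()"]
  obtain C where C: "C \<in> carrier_mat nc nc" "C * G = 1\<^sub>m nc"
    unfolding Units_def ring_mat_def by auto
  have "(C * transpose_mat A) * A = C * G" unfolding G_def
    using C A by (metis assoc_mult_mat transpose_carrier_mat)
  then show ?thesis using C A by (intro bexI[of _ "C * transpose_mat A"]) auto
qed


lemma real_factor:
  fixes A0 B0 A1 B1 La Lb g :: "real mat"
  assumes A0: "A0 \<in> carrier_mat n m" and B0: "B0 \<in> carrier_mat n k"
    and La: "La \<in> carrier_mat m n" "La * A0 = 1\<^sub>m m"
    and Lb: "Lb \<in> carrier_mat k n" "Lb * B0 = 1\<^sub>m k"
    and A1: "A1 \<in> carrier_mat n m" and B1: "B1 \<in> carrier_mat n k"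
    and g: "g \<in> carrier_mat (m*k) (m*k)"
    and eq: "kron_mat A0 B0 * g = kron_mat A1 B1"
  shows "g = kron_mat (La*A1) (Lb*B1)"
proof -
  have I: "kron_mat La Lb * kron_mat A0 B0 = 1\<^sub>m (m*k)"
    using kron_mult[OF La(1) Lb(1) A0 B0] La Lb kron_one by simp
  have "g = (kron_mat La Lb * kron_mat A0 B0) * g" using I g by simp
  also have "\<dots> = kron_mat La Lb * (kron_mat A0 B0 * g)"
    using La Lb A0 B0 g by (intro assoc_mult_mat) auto
  also have "\<dots> = kron_mat (La*A1) (Lb*B1)" unfolding eq using kron_mult[OF La(1) Lb(1) A1 B1] .
  finally show ?thesis .
qed

lemma int_split:
  fixes g :: "int mat" and P Q :: "real mat"
  assumes g: "g \<in> carrier_mat (m*k) (m*k)" and P: "P \<in> carrier_mat m m" and Q: "Q \<in> carrier_mat k k"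
    and eq: "map_mat real_of_int g = kron_mat P Q"
    and r: "r < m*k" and c: "c < m*k" and nz: "g $$ (r,c) \<noteq> 0"
  shows "\<exists>g1 \<in> carrier_mat m m. \<exists>g2 \<in> carrier_mat k k. g = kron_mat g1 g2"
proof -
  have entry: "real_of_int (g $$ (a,b)) = P $$ (a div k, b div k) * Q $$ (a mod k, b mod k)"
    if "a < m*k" "b < m*k" for a b
  proof -
    have "real_of_int (g $$ (a,b)) = map_mat real_of_int g $$ (a,b)" using that g by simp
    also have "\<dots> = P $$ (a div k, b div k) * Q $$ (a mod k, b mod k)" unfolding eq
      using that P Q by (subst kron_index) auto
    finally show ?thesis .
  qed
  have kpos: "k > 0" using r by (cases k) auto
  have entry2: "P $$ (i,j) * Q $$ (s,t) = real_of_int (g $$ (i*k+s, j*k+t))"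
    if "i < m" "j < m" "s < k" "t < k" for i j s t
  proof -
    have a: "i*k+s < m*k" proof -
      have "i*k+s < (i+1)*k" using that by simp
      also have "(i+1)*k \<le> m*k" using that by (intro mult_right_mono) auto
      finally show ?thesis .
    qed
    have b: "j*k+t < m*k" proof -
      have "j*k+t < (j+1)*k" using that by simp
      also have "(j+1)*k \<le> m*k" using that by (intro mult_right_mono) auto
      finally show ?thesis .
    qed
    show ?thesis using entry[OF a b] that kpos by simp
  qed
  define i0 where "i0 = r div k"
  define j0 where "j0 = c div k"
  define s0 where "s0 = r mod k"
  define t0 where "t0 = c mod k"
  have i0: "i0 < m" "j0 < m" "s0 < k" "t0 < k" unfolding i0_def j0_def s0_def t0_def
    using div_lt[OF r] div_lt[OF c] mod_lt[OF r] mod_lt[OF c] by auto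
  define y where "y = P $$ (i0,j0)"
  define x where "x = Q $$ (s0,t0)"
  have yx: "y * x = real_of_int (g $$ (r,c))" unfolding y_def x_def i0_def j0_def s0_def t0_def
    using entry[OF r c] by simp
  then have y0: "y \<noteq> 0" and x0: "x \<noteq> 0" using nz by auto
  define T where "T = {z::int. \<forall>i<m. \<forall>j<m. real_of_int z / y * P $$ (i,j) \<in> \<int>}"
  have Tsub: "z1 - q * z2 \<in> T" if "z1 \<in> T" "z2 \<in> T" for z1 z2 q
  proof -
    { fix i j assume ij: "i < m" "j < m"
      have "real_of_int (z1 - q*z2) / y * P $$ (i,j) = real_of_int z1 / y * P $$ (i,j) - real_of_int q * (real_of_int z2 / y * P $$ (i,j))"
        using y0 by (simp add: field_simps)
      also have "\<dots> \<in> \<int>"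
      proof -
        have h1: "real_of_int z1 / y * P $$ (i,j) \<in> \<int>" using that(1) ij unfolding T_def by blast
        have h2: "real_of_int z2 / y * P $$ (i,j) \<in> \<int>" using that(2) ij unfolding T_def by blast
        show ?thesis by (rule Ints_diff[OF h1 Ints_mult[OF Ints_of_int h2]])
      qed
      finally have "real_of_int (z1 - q*z2) / y * P $$ (i,j) \<in> \<int>" . }
    then show ?thesis unfolding T_def by auto
  qed
  have Tw: "g $$ (i0*k+s, j0*k+t) \<in> T" if "s < k" "t < k" for s t
  proof -
    { fix i j assume ij: "i < m" "j < m"
      have "real_of_int (g $$ (i0*k+s, j0*k+t)) / y * P $$ (i,j) = Q $$ (s,t) * P $$ (i,j)"
        using entry2[OF i0(1,2) that, symmetric] y0 unfolding y_def by (simp add: field_simps)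
      also have "\<dots> = real_of_int (g $$ (i*k+s, j*k+t))" using entry2[OF ij that] by (simp add: mult.commute)
      also have "\<dots> \<in> \<int>" by simp
      finally have "real_of_int (g $$ (i0*k+s, j0*k+t)) / y * P $$ (i,j) \<in> \<int>" . }
    then show ?thesis unfolding T_def by auto
  qed
  have rc: "g $$ (r,c) = g $$ (i0*k+s0, j0*k+t0)" unfolding i0_def j0_def s0_def t0_def by simp
  have z0T: "g $$ (r,c) \<in> T" unfolding rc by (rule Tw[OF i0(3,4)])
  have "\<bar>g $$ (r,c)\<bar> \<in> T"
  proof (cases "g $$ (r,c) \<ge> 0")
    case True then show ?thesis using z0T by simp
  next
    case False
    have "g $$ (r,c) - 1 * g $$ (r,c) \<in> T" by (rule Tsub[OF z0T z0T])
    then have "0 - 1 * g $$ (r,c) \<in> T" using Tsub[OF _ z0T, of 0 1] by simp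
    then show ?thesis using False by simp
  qed
  then have exT: "\<exists>N::nat. int N \<in> T \<and> N > 0" using nz
    by (intro exI[of _ "nat \<bar>g $$ (r,c)\<bar>"]) auto
  define N0 where "N0 = (LEAST N::nat. int N \<in> T \<and> N > 0)"
  define g0 where "g0 = int N0"
  have N0: "int N0 \<in> T \<and> N0 > 0" using LeastI_ex[OF exT] unfolding N0_def .
  then have g0: "g0 \<in> T" "g0 > 0" unfolding g0_def by auto
  have g0min: "g0 \<le> z" if "z \<in> T" "z > 0" for z
  proof -
    have "int (nat z) \<in> T \<and> nat z > 0" using that by auto
    then have "N0 \<le> nat z" unfolding N0_def by (rule Least_le)
    then show ?thesis unfolding g0_def using that by auto
  qed
  have g0dvd: "g0 dvd w" if "w \<in> T" for w
  proof -
    have "w - (w div g0) * g0 \<in> T" by (rule Tsub[OF that g0(1)])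
    then have mT: "w mod g0 \<in> T" by (simp add: minus_div_mult_eq_mod)
    have "w mod g0 = 0"
    proof (rule ccontr)
      assume "w mod g0 \<noteq> 0"
      then have "w mod g0 > 0" using g0(2) pos_mod_sign[of g0 w] by linarith
      then have "g0 \<le> w mod g0" using g0min mT by auto
      then show False using g0(2) pos_mod_bound[of g0 w] by linarith
    qed
    then show ?thesis by auto
  qed
  define cc where "cc = real_of_int g0 / y"
  have cc0: "cc \<noteq> 0" unfolding cc_def using g0 y0 by simp
  have cP: "cc * P $$ (i,j) \<in> \<int>" if "i < m" "j < m" for i j
    using g0(1) that unfolding T_def cc_def by auto
  define g1 where "g1 = mat m m (\<lambda>(i,j). \<lfloor>cc * P $$ (i,j)\<rfloor>)"
  define g2 where "g2 = mat k k (\<lambda>(s,t). g $$ (i0*k+s, j0*k+t) div g0)"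
  have g1e: "real_of_int (g1 $$ (i,j)) = cc * P $$ (i,j)" if "i < m" "j < m" for i j
    using cP[OF that] that unfolding g1_def by (auto elim: Ints_cases)
  have g2e: "real_of_int (g2 $$ (s,t)) = Q $$ (s,t) / cc" if "s < k" "t < k" for s t
  proof -
    have d: "g0 dvd g $$ (i0*k+s, j0*k+t)" using g0dvd Tw that by blast
    have "real_of_int (g2 $$ (s,t)) = real_of_int (g $$ (i0*k+s, j0*k+t)) / real_of_int g0"
      using that d unfolding g2_def by (auto simp: real_of_int_div)
    also have "\<dots> = y * Q $$ (s,t) / real_of_int g0" using entry2[OF i0(1,2) that] unfolding y_def by simp
    also have "\<dots> = Q $$ (s,t) / cc" unfolding cc_def using y0 g0 by simp
    finally show ?thesis .
  qed
  have "g = kron_mat g1 g2"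
  proof (rule eq_matI)
    show "dim_row g = dim_row (kron_mat g1 g2)" "dim_col g = dim_col (kron_mat g1 g2)"
      using g unfolding g1_def g2_def by auto
    fix a b assume "a < dim_row (kron_mat g1 g2)" "b < dim_col (kron_mat g1 g2)"
    then have a: "a < m*k" and b: "b < m*k" unfolding g1_def g2_def by auto
    have d1: "dim_row g1 = m" "dim_col g1 = m" "dim_row g2 = k" "dim_col g2 = k" unfolding g1_def g2_def by auto
    have "real_of_int (g $$ (a,b)) = P $$ (a div k, b div k) * Q $$ (a mod k, b mod k)" by (rule entry[OF a b])
    also have "\<dots> = (cc * P $$ (a div k, b div k)) * (Q $$ (a mod k, b mod k) / cc)" using cc0 by simp
    also have "\<dots> = real_of_int (g1 $$ (a div k, b div k)) * real_of_int (g2 $$ (a mod k, b mod k))"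
      using g1e[OF div_lt[OF a] div_lt[OF b]] g2e[OF mod_lt[OF a] mod_lt[OF b]] by simp
    also have "\<dots> = real_of_int (kron_mat g1 g2 $$ (a,b))" using a b d1 by simp
    finally have "real_of_int (g $$ (a,b)) = real_of_int (kron_mat g1 g2 $$ (a,b))" .
    then show "g $$ (a,b) = kron_mat g1 g2 $$ (a,b)" by linarith
  qed
  moreover have "g1 \<in> carrier_mat m m" "g2 \<in> carrier_mat k k" unfolding g1_def g2_def by auto
  ultimately show ?thesis by blast
qed


lemma kron_one_factors:
  fixes X Y :: "'a::comm_ring_1 mat"
  assumes X: "X \<in> carrier_mat m m" and Y: "Y \<in> carrier_mat k k" and m: "m > 0" and k: "k > 0"
    and eq: "kron_mat X Y = 1\<^sub>m (m*k)"
  shows "Y $$ (0,0) \<cdot>\<^sub>m X = 1\<^sub>m m" "X $$ (0,0) \<cdot>\<^sub>m Y = 1\<^sub>m k"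
proof -
  have e: "X $$ (i,j) * Y $$ (s,t) = (if i = j \<and> s = t then 1 else 0)"
    if "i < m" "j < m" "s < k" "t < k" for i j s t
  proof -
    have a: "i*k+s < m*k"
    proof -
      have "i*k+s < (i+1)*k" using that by simp
      also have "(i+1)*k \<le> m*k" using that by (intro mult_right_mono) auto
      finally show ?thesis .
    qed
    have b: "j*k+t < m*k"
    proof -
      have "j*k+t < (j+1)*k" using that by simp
      also have "(j+1)*k \<le> m*k" using that by (intro mult_right_mono) auto
      finally show ?thesis .
    qed
    have "kron_mat X Y $$ (i*k+s, j*k+t) = X $$ (i,j) * Y $$ (s,t)"
      using a b X Y that by simp
    moreover have "(i*k+s = j*k+t) = (i = j \<and> s = t)"
    proof
      assume h: "i*k+s = j*k+t"
      have "(i*k+s) div k = i" "(j*k+t) div k = j" "(i*k+s) mod k = s" "(j*k+t) mod k = t"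
        using that k by auto
      then show "i = j \<and> s = t" using h by metis
    qed auto
    ultimately show ?thesis using eq a b by auto
  qed
  show "Y $$ (0,0) \<cdot>\<^sub>m X = 1\<^sub>m m"
    by (rule eq_matI) (use X e[of _ _ 0 0] k in \<open>auto simp: mult.commute\<close>)
  show "X $$ (0,0) \<cdot>\<^sub>m Y = 1\<^sub>m k"
    by (rule eq_matI) (use Y e[of 0 0] m in \<open>auto\<close>)
qed

lemma map_int_mult:
  fixes A B :: "int mat"
  assumes "A \<in> carrier_mat a b" "B \<in> carrier_mat b c"
  shows "map_mat real_of_int (A * B) = map_mat real_of_int A * map_mat real_of_int B"
  by (rule eq_matI) (use assms in \<open>auto simp: scalar_prod_def of_int_sum\<close>)

lemma int_one_sided_invertible:
  fixes g h :: "int mat"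
  assumes g: "g \<in> carrier_mat n n" and h: "h \<in> carrier_mat n n" and gh: "g * h = 1\<^sub>m n"
  shows "invertible_mat g"
proof -
  let ?r = "map_mat (real_of_int)"
  have o: "?r (1\<^sub>m n) = 1\<^sub>m n" by (rule eq_matI) auto
  have "?r g * ?r h = 1\<^sub>m n"
    using map_int_mult[OF g h] gh o by simp
  then have "?r h * ?r g = 1\<^sub>m n" using mat_mult_left_right_inverse[of "?r g" n "?r h"] g h by simp
  then have "?r (h * g) = ?r (1\<^sub>m n)"
    using map_int_mult[OF h g] o by simp
  then have hg: "h * g = 1\<^sub>m n"
  proof -
    assume a: "?r (h * g) = ?r (1\<^sub>m n)"
    show ?thesis
    proof (rule eq_matI)
      fix i j assume "i < dim_row (1\<^sub>m n :: int mat)" "j < dim_col (1\<^sub>m n :: int mat)"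
      then have ij: "i < n" "j < n" by auto
      have "?r (h * g) $$ (i,j) = ?r (1\<^sub>m n) $$ (i,j)" using a by simp
      moreover have "?r (h * g) $$ (i,j) = real_of_int ((h*g) $$ (i,j))" using ij g h
        by (intro index_map_mat) auto
      moreover have "?r (1\<^sub>m n) $$ (i,j) = real_of_int ((1\<^sub>m n :: int mat) $$ (i,j))" using ij
        by (intro index_map_mat) auto
      ultimately show "(h * g) $$ (i,j) = (1\<^sub>m n :: int mat) $$ (i,j)" by simp
    qed (use g h in auto)
  qed
  show ?thesis unfolding invertible_mat_def inverts_mat_def using g h gh hg by auto
qed


theorem mainTheorem11:
  fixes n m :: nat and A B :: "real mat" and \<gamma> :: "int mat"
  assumes "1 \<le> m" and "m \<le> n - 1"
    and "kron_mat A B \<in> Y_set n m"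
    and "\<gamma> \<in> GL_int (m * (n - m))"
    and "kron_mat A B * map_mat real_of_int \<gamma> \<in> Y_set n m"
  shows "\<exists>\<gamma>1 \<gamma>2. \<gamma>1 \<in> GL_int m \<and> \<gamma>2 \<in> GL_int (n - m) \<and> \<gamma> = kron_mat \<gamma>1 \<gamma>2"
proof -
  define k where "k = n - m"
  have m: "m > 0" and k: "k > 0" and mn: "m \<le> n" using assms(1,2) unfolding k_def by auto
  from assms(3) obtain A0 B0 where Y0: "kron_mat A B = kron_mat A0 B0" "A0 \<in> carrier_mat n m"
    "B0 \<in> carrier_mat n k" "full_rank n A0" "full_rank n B0"
    unfolding Y_set_def k_def by blast
  from assms(5) obtain A1 B1 where Y1: "kron_mat A B * map_mat real_of_int \<gamma> = kron_mat A1 B1" "A1 \<in> carrier_mat n m"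
    "B1 \<in> carrier_mat n k" "full_rank n A1" "full_rank n B1"
    unfolding Y_set_def k_def by blast
  have kn: "k \<le> n" unfolding k_def by simp
  have rA0: "vec_space.rank n A0 = m" using Y0(2,4) mn unfolding full_rank_def by auto
  have rB0: "vec_space.rank n B0 = k" using Y0(3,5) kn unfolding full_rank_def by auto
  have rA1: "vec_space.rank n A1 = m" using Y1(2,4) mn unfolding full_rank_def by auto
  have rB1: "vec_space.rank n B1 = k" using Y1(3,5) kn unfolding full_rank_def by auto
  obtain La where La: "La \<in> carrier_mat m n" "La * A0 = 1\<^sub>m m" using left_inverse_exists[OF Y0(2) rA0] by blast
  obtain Lb where Lb: "Lb \<in> carrier_mat k n" "Lb * B0 = 1\<^sub>m k" using left_inverse_exists[OF Y0(3) rB0] by blast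
  obtain La1 where La1: "La1 \<in> carrier_mat m n" "La1 * A1 = 1\<^sub>m m" using left_inverse_exists[OF Y1(2) rA1] by blast
  obtain Lb1 where Lb1: "Lb1 \<in> carrier_mat k n" "Lb1 * B1 = 1\<^sub>m k" using left_inverse_exists[OF Y1(3) rB1] by blast
  have g: "\<gamma> \<in> carrier_mat (m*k) (m*k)" "invertible_mat \<gamma>" using assms(4) unfolding GL_int_def k_def by auto
  then obtain \<delta> where gd: "\<gamma> * \<delta> = 1\<^sub>m (m*k)" and dg: "\<delta> * \<gamma> = 1\<^sub>m (dim_row \<delta>)"
    unfolding invertible_mat_def inverts_mat_def by auto
  have d: "\<delta> \<in> carrier_mat (m*k) (m*k)"
  proof -
    have "dim_col \<delta> = m*k" using arg_cong[OF gd, of dim_col] by simp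
    moreover have "dim_row \<delta> = m*k" using arg_cong[OF dg, of dim_col] g by simp
    ultimately show ?thesis by auto
  qed
  have dg': "\<delta> * \<gamma> = 1\<^sub>m (m*k)" using dg d by simp
  let ?r = "map_mat real_of_int"
  have o: "?r (1\<^sub>m (m*k)) = 1\<^sub>m (m*k)" by (rule eq_matI) auto
  have rgd: "?r \<gamma> * ?r \<delta> = 1\<^sub>m (m*k)" using map_int_mult[OF g(1) d] gd o by simp
  have rg: "?r \<gamma> \<in> carrier_mat (m*k) (m*k)" and rd: "?r \<delta> \<in> carrier_mat (m*k) (m*k)" using g d by auto
  have K0: "kron_mat A0 B0 \<in> carrier_mat (n*n) (m*k)" using Y0(2,3) by simp
  have K1: "kron_mat A1 B1 \<in> carrier_mat (n*n) (m*k)" using Y1(2,3) by simp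
  have e1: "kron_mat A0 B0 * ?r \<gamma> = kron_mat A1 B1" using Y1(1) Y0(1) by simp
  have F1: "?r \<gamma> = kron_mat (La*A1) (Lb*B1)"
    by (rule real_factor[OF Y0(2,3) La Lb Y1(2,3) rg e1])
  have e2: "kron_mat A1 B1 * ?r \<delta> = kron_mat A0 B0"
  proof -
    have "kron_mat A1 B1 * ?r \<delta> = (kron_mat A0 B0 * ?r \<gamma>) * ?r \<delta>" using e1 by simp
    also have "\<dots> = kron_mat A0 B0 * (?r \<gamma> * ?r \<delta>)" using K0 rg rd by (intro assoc_mult_mat) auto
    also have "\<dots> = kron_mat A0 B0" unfolding rgd by (rule right_mult_one_mat[OF K0])
    finally show ?thesis .
  qed
  have F2: "?r \<delta> = kron_mat (La1*A0) (Lb1*B0)"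
    by (rule real_factor[OF Y1(2,3) La1 Lb1 Y0(2,3) rd e2])
  have mk: "0 < m*k" using m k by simp
  have nzg: "\<exists>r<m*k. \<exists>c<m*k. \<gamma> $$ (r,c) \<noteq> 0"
  proof (rule ccontr)
    assume "\<not> ?thesis"
    then have "(\<gamma> * \<delta>) $$ (0,0) = 0" using g d mk by (auto simp: scalar_prod_def)
    then show False using gd mk by simp
  qed
  have nzd: "\<exists>r<m*k. \<exists>c<m*k. \<delta> $$ (r,c) \<noteq> 0"
  proof (rule ccontr)
    assume "\<not> ?thesis"
    then have "(\<gamma> * \<delta>) $$ (0,0) = 0" using g d mk by (auto simp: scalar_prod_def)
    then show False using gd mk by simp
  qed
  obtain r c where rc: "r < m*k" "c < m*k" "\<gamma> $$ (r,c) \<noteq> 0" using nzg by blast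
  obtain r' c' where rc': "r' < m*k" "c' < m*k" "\<delta> $$ (r',c') \<noteq> 0" using nzd by blast
  have P1: "La*A1 \<in> carrier_mat m m" "Lb*B1 \<in> carrier_mat k k" using La Lb Y1 by auto
  have P2: "La1*A0 \<in> carrier_mat m m" "Lb1*B0 \<in> carrier_mat k k" using La1 Lb1 Y0 by auto
  obtain g1 g2 where G: "g1 \<in> carrier_mat m m" "g2 \<in> carrier_mat k k" "\<gamma> = kron_mat g1 g2"
    using int_split[OF g(1) P1 F1 rc] by blast
  obtain d1 d2 where D: "d1 \<in> carrier_mat m m" "d2 \<in> carrier_mat k k" "\<delta> = kron_mat d1 d2"
    using int_split[OF d P2 F2 rc'] by blast
  have "kron_mat (g1*d1) (g2*d2) = 1\<^sub>m (m*k)"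
    using gd kron_mult[OF G(1,2) D(1,2)] G(3) D(3) by simp
  note KF = kron_one_factors[OF _ _ m k this]
  have X: "g1*d1 \<in> carrier_mat m m" and Yc: "g2*d2 \<in> carrier_mat k k" using G D by auto
  define a where "a = (g2*d2) $$ (0,0)"
  define b where "b = (g1*d1) $$ (0,0)"
  have "g1 * (a \<cdot>\<^sub>m d1) = 1\<^sub>m m"
    using mult_smult_distrib[OF G(1) D(1)] KF(1)[OF X Yc] unfolding a_def by simp
  then have i1: "invertible_mat g1" using int_one_sided_invertible[OF G(1) smult_carrier_mat[OF D(1)]] by blast
  have "g2 * (b \<cdot>\<^sub>m d2) = 1\<^sub>m k"
    using mult_smult_distrib[OF G(2) D(2)] KF(2)[OF X Yc] unfolding b_def by simp
  then have i2: "invertible_mat g2" using int_one_sided_invertible[OF G(2) smult_carrier_mat[OF D(2)]] by blast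
  show ?thesis
    using G i1 i2 unfolding GL_int_def k_def by auto
qed

end
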